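(* Let $U=\{\xi_1,\dots,\xi_p\}\subset\mathbb{R}^k$ be finite, and for $j\in\Lambda=\{1,\dots,m\}$ let $f_j:\mathbb{R}^n\times U\to\mathbb{R}$ be such that $x\mapsto f_j(x,\xi_i)$ is continuously differentiable and convex for each $i\in\bar\Lambda=\{1,\dots,p\}$. Let $\{x^k\}$ be the sequence of iterates generated by Algorithm 1 (described in the context). If $\tilde x\in\mathbb{R}^n$ and $k$ is an index such that $f_j(\tilde x,\xi_i)\le f_j(x^k,\xi_i)$ for all $i\in\bar\Lambda$, $j\in\Lambda$, then $$\|\tilde x-x^{k+1}\|^2\le \|\tilde x-x^k\|^2+\|x^k-x^{k+1}\|^2 .$$
   Context: Let $\Phi_j(x)=\max_{i\in\bar\Lambda} f_j(x,\xi_i)$ and $\Phi=(\Phi_1,\dots,\Phi_m)$. For $x\in\mathbb{R}^n$, let $\vartheta_x(t)=\max_{j\in\Lambda}\max_{i\in\bar\Lambda}\{f_j(x,\xi_i)+\nabla f_j(x,\xi_i)^Tt-\Phi_j(x)\}$, let $t(x)$ be the unique minimizer over $t\in\mathbb{R}^n$ of $\vartheta_x(t)+\frac12\|t\|^2$, and $\Theta(x)=\vartheta_x(t(x))+\frac12\|t(x)\|^2$ its optimal value. Algorithm 1: choose $\epsilon>0$, $\beta\in(0,1)$, $x^0\in\mathbb{R}^n$, set $k=0$. Step 2: compute $t^k=t(x^k)$ and $\Theta(x^k)$. Step 3: if $|\Theta(x^k)|<\epsilon$, stop. Step 4: let $\alpha_k$ be the largest $\alpha\in\{1/2^r:r=1,2,3,\dots\}$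 such that for all $j\in\Lambda$, $\Phi_j(x^k+\alpha t^k)\le\Phi_j(x^k)+\alpha\beta\big(\max_{i\in\bar\Lambda}\{f_j(x^k,\xi_i)+\nabla f_j(x^k,\xi_i)^Tt^k\}-\Phi_j(x^k)\big)$. Step 5: set $x^{k+1}=x^k+\alpha_kt^k$, $k:=k+1$, go to Step 2. Gradients are with respect to $x$. *)

theory Defs
  imports "HOL-Analysis.Analysis"
begin

text \<open>Index sets: Lambda = {1..m} (objectives), bar Lambda = {1..p} (scenarios xi_1..xi_p).
  f j x u is f_j(x,u); g j i x is the gradient of x -> f_j(x, xi_i) at x.\<close>

definition Phi :: "(nat \<Rightarrow> 'x \<Rightarrow> 'u \<Rightarrow> real) \<Rightarrow> (nat \<Rightarrow> 'u) \<Rightarrow> nat \<Rightarrow> nat \<Rightarrow> 'x \<Rightarrow> real" where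
  "Phi f \<xi> p j x = Max ((\<lambda>i. f j x (\<xi> i)) ` {1..p})"

definition vartheta ::
  "(nat \<Rightarrow> ('a::real_inner) \<Rightarrow> 'u \<Rightarrow> real) \<Rightarrow> (nat \<Rightarrow> nat \<Rightarrow> 'a \<Rightarrow> 'a) \<Rightarrow> (nat \<Rightarrow> 'u)
    \<Rightarrow> nat \<Rightarrow> nat \<Rightarrow> 'a \<Rightarrow> 'a \<Rightarrow> real" where
  "vartheta f g \<xi> m p x t =
     Max ((\<lambda>j. Max ((\<lambda>i. f j x (\<xi> i) + g j i x \<bullet> t - Phi f \<xi> p j x) ` {1..p})) ` {1..m})"

definition tdir ::
  "(nat \<Rightarrow> ('a::real_inner) \<Rightarrow> 'u \<Rightarrow> real) \<Rightarrow> (nat \<Rightarrow> nat \<Rightarrow> 'a \<Rightarrow> 'a) \<Rightarrow> (nat \<Rightarrow> 'u)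
    \<Rightarrow> nat \<Rightarrow> nat \<Rightarrow> 'a \<Rightarrow> 'a" where
  "tdir f g \<xi> m p x = (THE t. \<forall>s. vartheta f g \<xi> m p x t + (norm t)\<^sup>2 / 2
                                   \<le> vartheta f g \<xi> m p x s + (norm s)\<^sup>2 / 2)"

definition Theta ::
  "(nat \<Rightarrow> ('a::real_inner) \<Rightarrow> 'u \<Rightarrow> real) \<Rightarrow> (nat \<Rightarrow> nat \<Rightarrow> 'a \<Rightarrow> 'a) \<Rightarrow> (nat \<Rightarrow> 'u)
    \<Rightarrow> nat \<Rightarrow> nat \<Rightarrow> 'a \<Rightarrow> real" where
  "Theta f g \<xi> m p x = (let t = tdir f g \<xi> m p x in vartheta f g \<xi> m p x t + (norm t)\<^sup>2 / 2)"

definition armijo ::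
  "(nat \<Rightarrow> ('a::real_inner) \<Rightarrow> 'u \<Rightarrow> real) \<Rightarrow> (nat \<Rightarrow> nat \<Rightarrow> 'a \<Rightarrow> 'a) \<Rightarrow> (nat \<Rightarrow> 'u)
    \<Rightarrow> nat \<Rightarrow> nat \<Rightarrow> real \<Rightarrow> 'a \<Rightarrow> 'a \<Rightarrow> real \<Rightarrow> bool" where
  "armijo f g \<xi> m p \<beta> x t \<alpha> \<longleftrightarrow>
     (\<forall>j\<in>{1..m}. Phi f \<xi> p j (x + \<alpha> *\<^sub>R t) \<le> Phi f \<xi> p j x
        + \<alpha> * \<beta> * (Max ((\<lambda>i. f j x (\<xi> i) + g j i x \<bullet> t) ` {1..p}) - Phi f \<xi> p j x))"

text \<open>xs is generated by Algorithm 1 up to (and including) producing iterate k+1: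
  Steps 2-5 were executed at every l \<le> k without stopping.\<close>
definition alg1_upto ::
  "(nat \<Rightarrow> ('a::real_inner) \<Rightarrow> 'u \<Rightarrow> real) \<Rightarrow> (nat \<Rightarrow> nat \<Rightarrow> 'a \<Rightarrow> 'a) \<Rightarrow> (nat \<Rightarrow> 'u)
    \<Rightarrow> nat \<Rightarrow> nat \<Rightarrow> real \<Rightarrow> real \<Rightarrow> (nat \<Rightarrow> 'a) \<Rightarrow> nat \<Rightarrow> bool" where
  "alg1_upto f g \<xi> m p \<epsilon> \<beta> xs k \<longleftrightarrow>
     (\<forall>l\<le>k. \<not> \<bar>Theta f g \<xi> m p (xs l)\<bar> < \<epsilon> \<and>
       (\<exists>\<alpha>. (\<exists>r::nat. r \<ge> 1 \<and> \<alpha> = 1 / 2 ^ r)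
           \<and> armijo f g \<xi> m p \<beta> (xs l) (tdir f g \<xi> m p (xs l)) \<alpha>
           \<and> (\<forall>r::nat. r \<ge> 1 \<longrightarrow> armijo f g \<xi> m p \<beta> (xs l) (tdir f g \<xi> m p (xs l)) (1 / 2 ^ r)
                 \<longrightarrow> 1 / 2 ^ r \<le> \<alpha>)
           \<and> xs (Suc l) = xs l + \<alpha> *\<^sub>R tdir f g \<xi> m p (xs l)))"

end

theory Submission imports Defs begin
lemma tangent_le:
  fixes F :: "'a::real_normed_vector \<Rightarrow> real"
  assumes cv: "convex_on UNIV F" and d: "(F has_derivative L) (at x)"
  shows "L (y - x) \<le> F y - F x"
proof -
  define dd where "dd = y - x"
  define \<phi> where "\<phi> s = F (x + s *\<^sub>R dd)" for s :: real
  have lin: "linear L" using d has_derivative_linear by blast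
  have cphi: "convex_on UNIV \<phi>"
  proof (rule convex_onI)
    fix t a b :: real assume t: "0 < t" "t < 1"
    have "(1 - t) *\<^sub>R a + t *\<^sub>R b = (1-t) * a + t * b" by simp
    have eq: "x + ((1 - t) *\<^sub>R a + t *\<^sub>R b) *\<^sub>R dd = (1 - t) *\<^sub>R (x + a *\<^sub>R dd) + t *\<^sub>R (x + b *\<^sub>R dd)"
      by (simp add: algebra_simps)
    show "\<phi> ((1 - t) *\<^sub>R a + t *\<^sub>R b) \<le> (1 - t) * \<phi> a + t * \<phi> b"
      unfolding \<phi>_def eq using convex_onD[OF cv, of t] t by auto
  qed simp
  have "((\<lambda>s. x + s *\<^sub>R dd) has_derivative (\<lambda>h. h *\<^sub>R dd)) (at 0)"
    by (auto intro!: derivative_eq_intros)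
  moreover have "(F has_derivative L) (at (x + 0 *\<^sub>R dd))" using d by simp
  ultimately have "(\<phi> has_derivative (\<lambda>h. L (h *\<^sub>R dd))) (at 0)"
    unfolding \<phi>_def using has_derivative_compose[of "\<lambda>s. x + s *\<^sub>R dd" _ 0 UNIV F L] by (simp add: o_def)
  hence "(\<phi> has_derivative (\<lambda>h. L dd * h)) (at 0)"
    using linear_scale[OF lin] by (simp add: mult.commute)
  hence "(\<phi> has_field_derivative L dd) (at 0 within UNIV)"
    by (simp add: has_field_derivative_def)
  from convex_on_imp_above_tangent[OF cphi _ _ _ this, of 1]
  have "\<phi> 1 - \<phi> 0 \<ge> L dd * (1 - 0)" by simp
  thus ?thesis unfolding \<phi>_def dd_def by simp
qed
lemma cont_Max_fin:
  fixes F :: "'i \<Rightarrow> 'a::topological_space \<Rightarrow> real"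
  assumes "finite S" "S \<noteq> {}" "\<And>i. i \<in> S \<Longrightarrow> continuous_on U (F i)"
  shows "continuous_on U (\<lambda>t. Max ((\<lambda>i. F i t) ` S))"
  using assms
proof (induction S rule: finite_ne_induct)
  case (singleton x) thus ?case by simp
next
  case (insert x S)
  have "continuous_on U (\<lambda>t. max (F x t) (Max ((\<lambda>i. F i t) ` S)))"
    using insert by (intro continuous_on_max) auto
  thus ?case using insert by simp
qed

lemma vt_ge:
  assumes "j \<in> {1..m}" "i \<in> {1..p}"
  shows "f j x (\<xi> i) + g j i x \<bullet> t - Phi f \<xi> p j x \<le> vartheta f g \<xi> m p x t"
proof -
  have "f j x (\<xi> i) + g j i x \<bullet> t - Phi f \<xi> p j x \<le> Max ((\<lambda>i. f j x (\<xi> i) + g j i x \<bullet> t - Phi f \<xi> p j x) ` {1..p})"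
    using assms by (intro Max_ge) auto
  also have "\<dots> \<le> vartheta f g \<xi> m p x t" unfolding vartheta_def
    using assms by (intro Max_ge) auto
  finally show ?thesis .
qed

lemma vt_le:
  assumes "m \<ge> 1" "p \<ge> 1"
    and "\<And>j i. j \<in> {1..m} \<Longrightarrow> i \<in> {1..p} \<Longrightarrow> f j x (\<xi> i) + g j i x \<bullet> t - Phi f \<xi> p j x \<le> c"
  shows "vartheta f g \<xi> m p x t \<le> c"
  unfolding vartheta_def using assms by (subst Max_le_iff; auto simp: Max_le_iff)

lemma vt_cont:
  assumes "m \<ge> 1" "p \<ge> 1"
  shows "continuous_on UNIV (vartheta f g \<xi> m p x)"
  unfolding vartheta_def using assms
  by (intro cont_Max_fin continuous_intros) auto

lemma Phi_ge:
  assumes "i \<in> {1..p}"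
  shows "f j x (\<xi> i) \<le> Phi f \<xi> p j x"
  unfolding Phi_def using assms by (intro Max_ge) auto

lemma tdir_min:
  fixes f :: "nat \<Rightarrow> 'a::euclidean_space \<Rightarrow> 'u \<Rightarrow> real" and g :: "nat \<Rightarrow> nat \<Rightarrow> 'a \<Rightarrow> 'a"
  assumes m: "m \<ge> 1" and p: "p \<ge> 1"
  shows "\<forall>s. vartheta f g \<xi> m p x (tdir f g \<xi> m p x) + (norm (tdir f g \<xi> m p x))\<^sup>2 / 2
              \<le> vartheta f g \<xi> m p x s + (norm s)\<^sup>2 / 2"
proof -
  define V where "V = vartheta f g \<xi> m p x"
  define h where "h t = V t + (norm t)\<^sup>2 / 2" for t
  have j1: "(1::nat) \<in> {1..m}" and i1: "(1::nat) \<in> {1..p}" using m p by auto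
  define G where "G = norm (g 1 1 x)"
  define c where "c = f 1 x (\<xi> 1) - Phi f \<xi> p 1 x"
  have c0: "c \<le> 0" unfolding c_def using Phi_ge[OF i1] by simp
  have V0: "V 0 \<le> 0" unfolding V_def
    by (rule vt_le[OF m p]) (simp add: Phi_ge)
  have Vlow: "V t \<ge> c - G * norm t" for t
  proof -
    have "c - G * norm t \<le> c + g 1 1 x \<bullet> t"
      unfolding G_def using Cauchy_Schwarz_ineq2[of "g 1 1 x" t] by (auto simp: abs_le_iff)
    also have "\<dots> \<le> V t" unfolding V_def c_def using vt_ge[OF j1 i1, of f x \<xi> g t] by simp
    finally show ?thesis .
  qed
  define R where "R = 2 * G - c + 2"
  have G0: "G \<ge> 0" unfolding G_def by simp
  have outside: "h t > h 0" if "norm t > R" for t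
  proof -
    let ?r = "norm t"
    have r2: "?r \<ge> 2" using that c0 G0 unfolding R_def by linarith
    have pos: "?r / 2 - G > (- c + 2) / 2" using that unfolding R_def by (simp add: field_simps)
    have "?r * (?r/2 - G) \<ge> 2 * (?r/2 - G)"
      using r2 pos c0 by (intro mult_right_mono) auto
    moreover have "2 * (?r/2 - G) > - c + 2" using pos by (simp add: field_simps)
    ultimately have "?r * (?r/2 - G) > - c" by linarith
    hence "c - G * ?r + ?r^2/2 > 0" by (simp add: power2_eq_square algebra_simps)
    hence "h t > 0" unfolding h_def using Vlow[of t] by linarith
    thus ?thesis unfolding h_def using V0 by simp
  qed
  have conth: "continuous_on UNIV h" unfolding h_def V_def
    by (intro continuous_intros vt_cont[OF m p]) auto
  have "R \<ge> 0" using c0 G0 unfolding R_def by simp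
  moreover have "continuous_on (cball 0 R) h" using conth by (rule continuous_on_subset) simp
  ultimately obtain t0 where t0: "t0 \<in> cball 0 R" "\<forall>y\<in>cball 0 R. h t0 \<le> h y"
    using continuous_attains_inf[of "cball 0 R" h] by auto
  have "0 \<in> cball (0::'a) R" using c0 G0 unfolding R_def by simp
  hence min0: "\<forall>s. h t0 \<le> h s"
    using t0 outside by (metis dual_order.trans less_imp_le mem_cball_0 not_le)
  have uniq: "t1 = t2" if t1: "\<forall>s. h t1 \<le> h s" and t2: "\<forall>s. h t2 \<le> h s" for t1 t2
  proof (rule ccontr)
    assume ne: "t1 \<noteq> t2"
    define tm where "tm = (1/2) *\<^sub>R (t1 + t2)"
    have Vm: "V tm \<le> (V t1 + V t2) / 2" unfolding V_def
    proof (rule vt_le[OF m p])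
      fix j i assume ji: "j \<in> {1..m}" "i \<in> {1..p}"
      have "f j x (\<xi> i) + g j i x \<bullet> tm - Phi f \<xi> p j x =
        ((f j x (\<xi> i) + g j i x \<bullet> t1 - Phi f \<xi> p j x) + (f j x (\<xi> i) + g j i x \<bullet> t2 - Phi f \<xi> p j x))/2"
        unfolding tm_def by (simp add: inner_add_right algebra_simps)
      also have "\<dots> \<le> (vartheta f g \<xi> m p x t1 + vartheta f g \<xi> m p x t2) / 2"
        using vt_ge[OF ji, of f x \<xi> g t1] vt_ge[OF ji, of f x \<xi> g t2] by simp
      finally show "f j x (\<xi> i) + g j i x \<bullet> tm - Phi f \<xi> p j x \<le> (vartheta f g \<xi> m p x t1 + vartheta f g \<xi> m p x t2) / 2" .
    qed
    have nd: "(norm (t1 - t2))\<^sup>2 > 0" using ne by simp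
    have "(norm tm)\<^sup>2 = ((norm t1)\<^sup>2 + (norm t2)\<^sup>2) / 2 - (norm (t1 - t2))\<^sup>2 / 4"
    proof -
      have e1: "(t1 + t2) \<bullet> (t1 + t2) = t1 \<bullet> t1 + t2 \<bullet> t2 + 2 * (t1 \<bullet> t2)"
        by (simp add: inner_add_left inner_add_right inner_commute)
      have e2: "(t1 - t2) \<bullet> (t1 - t2) = t1 \<bullet> t1 + t2 \<bullet> t2 - 2 * (t1 \<bullet> t2)"
        by (simp add: inner_diff_left inner_diff_right inner_commute)
      have e3: "tm \<bullet> tm = ((t1 + t2) \<bullet> (t1 + t2)) / 4" unfolding tm_def by simp
      show ?thesis unfolding power2_norm_eq_inner unfolding e3 e1 e2 by (simp add: field_simps)
    qed
    hence n4: "4 * (norm tm)\<^sup>2 = 2 * (norm t1)\<^sup>2 + 2 * (norm t2)\<^sup>2 - (norm (t1 - t2))\<^sup>2" by (simp add: field_simps)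
    have v2: "2 * V tm \<le> V t1 + V t2" using Vm by (simp add: field_simps)
    have "4 * h tm = 4 * V tm + 2 * (norm tm)\<^sup>2" "2 * h t1 = 2 * V t1 + (norm t1)\<^sup>2"
      "2 * h t2 = 2 * V t2 + (norm t2)\<^sup>2" unfolding h_def by simp_all
    hence "4 * h tm < 2 * h t1 + 2 * h t2" using n4 v2 nd by linarith
    moreover have "h t1 \<le> h tm" "h t2 \<le> h tm" using t1 t2 by auto
    ultimately show False by linarith
  qed
  have "tdir f g \<xi> m p x = t0"
    unfolding tdir_def
    apply (rule the_equality)
    using min0 uniq unfolding h_def V_def by auto
  thus ?thesis using min0 unfolding h_def V_def by simp
qed

theorem lemma4p3:
  fixes f :: "nat \<Rightarrow> real^'n \<Rightarrow> real^'k \<Rightarrow> real"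
    and g :: "nat \<Rightarrow> nat \<Rightarrow> real^'n \<Rightarrow> real^'n"
    and \<xi> :: "nat \<Rightarrow> real^'k"
    and m p :: nat and \<epsilon> \<beta> :: real
    and xs :: "nat \<Rightarrow> real^'n" and xt :: "real^'n" and k :: nat
  assumes "m \<ge> 1" and "p \<ge> 1"
    and grad: "\<And>j i x. j \<in> {1..m} \<Longrightarrow> i \<in> {1..p} \<Longrightarrow>
                 ((\<lambda>y. f j y (\<xi> i)) has_derivative (\<lambda>h. g j i x \<bullet> h)) (at x)"
    and contgrad: "\<And>j i. j \<in> {1..m} \<Longrightarrow> i \<in> {1..p} \<Longrightarrow> continuous_on UNIV (g j i)"
    and conv: "\<And>j i. j \<in> {1..m} \<Longrightarrow> i \<in> {1..p} \<Longrightarrow> convex_on UNIV (\<lambda>y. f j y (\<xi> i))"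
    and "\<epsilon> > 0" and "0 < \<beta>" and "\<beta> < 1"
    and alg: "alg1_upto f g \<xi> m p \<epsilon> \<beta> xs k"
    and le: "\<And>i j. i \<in> {1..p} \<Longrightarrow> j \<in> {1..m} \<Longrightarrow> f j xt (\<xi> i) \<le> f j (xs k) (\<xi> i)"
  shows "(norm (xt - xs (Suc k)))\<^sup>2 \<le> (norm (xt - xs k))\<^sup>2 + (norm (xs k - xs (Suc k)))\<^sup>2"
proof -
  note m = \<open>m \<ge> 1\<close> and p = \<open>p \<ge> 1\<close>
  define x where "x = xs k"
  define t0 where "t0 = tdir f g \<xi> m p x"
  define V where "V = vartheta f g \<xi> m p x"
  define d where "d = xt - x"
  have min: "V t0 + (norm t0)\<^sup>2 / 2 \<le> V s + (norm s)\<^sup>2 / 2" for s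
    using tdir_min[OF m p, of f g \<xi> x] unfolding t0_def V_def by blast
  have gd: "g j i x \<bullet> d \<le> 0" if ji: "j \<in> {1..m}" "i \<in> {1..p}" for j i
  proof -
    have "g j i x \<bullet> d \<le> f j xt (\<xi> i) - f j x (\<xi> i)"
      unfolding d_def using tangent_le[OF conv[OF ji] grad[OF ji, of x]] by simp
    thus ?thesis using le[of i j] ji unfolding x_def by simp
  qed
  have Vmono: "V (t0 + \<tau> *\<^sub>R d) \<le> V t0" if "\<tau> \<ge> 0" for \<tau>
    unfolding V_def
  proof (rule vt_le[OF m p])
    fix j i assume ji: "j \<in> {1..m}" "i \<in> {1..p}"
    have "\<tau> * (g j i x \<bullet> d) \<le> 0" using gd[OF ji] that by (simp add: mult_nonneg_nonpos)
    hence "f j x (\<xi> i) + g j i x \<bullet> (t0 + \<tau> *\<^sub>R d) - Phi f \<xi> p j x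
        \<le> f j x (\<xi> i) + g j i x \<bullet> t0 - Phi f \<xi> p j x"
      by (simp add: inner_add_right)
    also have "\<dots> \<le> vartheta f g \<xi> m p x t0" by (rule vt_ge[OF ji])
    finally show "f j x (\<xi> i) + g j i x \<bullet> (t0 + \<tau> *\<^sub>R d) - Phi f \<xi> p j x \<le> vartheta f g \<xi> m p x t0" .
  qed
  have key: "0 \<le> t0 \<bullet> d + \<tau> / 2 * (d \<bullet> d)" if "\<tau> > 0" for \<tau>
  proof -
    have "V t0 + (norm t0)\<^sup>2 / 2 \<le> V (t0 + \<tau> *\<^sub>R d) + (norm (t0 + \<tau> *\<^sub>R d))\<^sup>2 / 2" by (rule min)
    hence "(norm t0)\<^sup>2 \<le> (norm (t0 + \<tau> *\<^sub>R d))\<^sup>2" using Vmono[of \<tau>] that by linarith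
    hence "t0 \<bullet> t0 \<le> t0 \<bullet> t0 + 2 * \<tau> * (t0 \<bullet> d) + \<tau> * \<tau> * (d \<bullet> d)"
      unfolding power2_norm_eq_inner by (simp add: inner_add_left inner_add_right inner_commute algebra_simps)
    hence "0 \<le> \<tau> * (2 * (t0 \<bullet> d) + \<tau> * (d \<bullet> d))" by (simp add: algebra_simps)
    hence "0 \<le> 2 * (t0 \<bullet> d) + \<tau> * (d \<bullet> d)" using that by (simp add: zero_le_mult_iff)
    thus ?thesis by simp
  qed
  have td: "t0 \<bullet> d \<ge> 0"
  proof (rule ccontr)
    assume neg: "\<not> t0 \<bullet> d \<ge> 0"
    hence "d \<noteq> 0" by auto
    hence dd: "d \<bullet> d > 0" by simp
    define \<tau> where "\<tau> = - (t0 \<bullet> d) / (d \<bullet> d)"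
    have "\<tau> > 0" unfolding \<tau>_def using neg dd by (simp add: divide_neg_pos)
    from key[OF this] have "0 \<le> t0 \<bullet> d + \<tau> / 2 * (d \<bullet> d)" .
    also have "\<tau> / 2 * (d \<bullet> d) = - (t0 \<bullet> d) / 2" unfolding \<tau>_def using dd by (simp add: field_simps)
    finally show False using neg by simp
  qed
  from alg have "\<exists>\<alpha>. (\<exists>r::nat. r \<ge> 1 \<and> \<alpha> = 1 / 2 ^ r) \<and> xs (Suc k) = xs k + \<alpha> *\<^sub>R tdir f g \<xi> m p (xs k)"
    unfolding alg1_upto_def by blast
  then obtain \<alpha> r where ar: "\<alpha> = 1 / 2 ^ r" and xs1: "xs (Suc k) = x + \<alpha> *\<^sub>R t0"
    unfolding x_def t0_def by blast
  have a0: "\<alpha> \<ge> 0" using ar by simp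
  have e1: "xt - xs (Suc k) = d - \<alpha> *\<^sub>R t0" unfolding xs1 d_def by simp
  have e2: "xs k - xs (Suc k) = - (\<alpha> *\<^sub>R t0)" unfolding xs1 x_def by simp
  have "(norm (d - \<alpha> *\<^sub>R t0))\<^sup>2 = (norm d)\<^sup>2 - 2 * \<alpha> * (t0 \<bullet> d) + (norm (\<alpha> *\<^sub>R t0))\<^sup>2"
    unfolding power2_norm_eq_inner by (simp add: inner_diff_left inner_diff_right inner_commute algebra_simps)
  moreover have "\<alpha> * (t0 \<bullet> d) \<ge> 0" using a0 td by simp
  ultimately show ?thesis unfolding e1 e2 norm_minus_cancel d_def x_def by linarith
qed

end
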